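(* Let $w:\mathbb R_+\to\mathbb R$ be bounded, continuous, nondecreasing and nonpositive. Then the equation $(Gw)(\phi)=0$ has exactly one strictly positive solution $\phi=\phi[w]$. Moreover, if $\phi_\ell[w]$ denotes the unique root of $\phi\mapsto(g+\lambda_0(Kw))(\phi)$ and $\phi_r[w]:=\phi[w_0]$ with $w_0\equiv-\|w\|$ (the constant function), then $\phi_\ell[w]\le\phi[w]\le\phi_r[w]$. Finally, $(Gw)(\phi)<0$ for $\phi\in(0,\phi[w])$ and $(Gw)(\phi)>0$ for $\phi\in(\phi[w],\infty)$.
   Context: Fix constants $\lambda,\lambda_0,\lambda_1\in(0,\infty)$, $\mu\in\mathbb R\setminus\{0\}$, $c>0$, $a:=\lambda-\lambda_1+\lambda_0$. Let $(E,\mathcal E)$ be a measurable space with probability measures $\nu_0,\nu_1$, $\nu_1\ll\nu_0$, $f:=d\nu_1/d\nu_0$. Let $g(\phi)=\phi-\lambda/c$, $(Kw)(\phi)=\int_Ew(\frac{\lambda_1}{\lambda_0}f(z)\phi)\nu_0(dz)$, $\sigma(z)=\mu z$, $\mathcal A_0h(\phi)=\frac{\mu^2}{2}\phi^2h''(\phi)+(\lambda+a\phi)h'(\phi)$. Let $\psi,\eta$ be the increasing and decreasing (respectively) positive solutions of $\mathcal A_0h=(\lambda+\lambda_0)h$ on $(0,\infty)$ (unique up to positive multiples), with $0<\psi(0+)<\infty$, $\eta(0+)=\infty$, $\psi(\infty)=\infty$, $\eta(\infty)=0$, $\lim_{y\to\infty}\psi'(y)/S'(y)=\infty$ where $S'(y)=\exp\{-2\int_{y_0}^y\frac{\lambda+au}{\mu^2u^2}du\}$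 for a fixed $y_0>0$. Let $B(z)=\psi'(z)\eta(z)-\psi(z)\eta'(z)$ (a positive multiple of $S'(z)$). Define $(Gw)(r)=\int_0^r\frac{2\psi(z)}{\sigma^2(z)B(z)}(g+\lambda_0(Kw))(z)dz$ for $r\ge0$. *)

theory Defs
  imports "HOL-Probability.Probability"
begin

definition gfun :: "real \<Rightarrow> real \<Rightarrow> real \<Rightarrow> real" where
  "gfun lam c phi = phi - lam / c"

text \<open>f = d nu1 / d nu0 (Radon-Nikodym derivative, real-valued).\<close>
definition fRN :: "'e measure \<Rightarrow> 'e measure \<Rightarrow> 'e \<Rightarrow> real" where
  "fRN nu0 nu1 z = enn2real (RN_deriv nu0 nu1 z)"

definition Kop :: "real \<Rightarrow> real \<Rightarrow> 'e measure \<Rightarrow> 'e measure \<Rightarrow> (real \<Rightarrow> real) \<Rightarrow> real \<Rightarrow> real" where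
  "Kop lam0 lam1 nu0 nu1 w phi = (\<integral>z. w (lam1 / lam0 * fRN nu0 nu1 z * phi) \<partial>nu0)"

definition A0op :: "real \<Rightarrow> real \<Rightarrow> real \<Rightarrow> real \<Rightarrow> (real \<Rightarrow> real) \<Rightarrow> real \<Rightarrow> real" where
  "A0op lam lam0 lam1 mu h y =
     mu\<^sup>2 / 2 * y\<^sup>2 * deriv (deriv h) y + (lam + (lam - lam1 + lam0) * y) * deriv h y"

definition oint :: "(real \<Rightarrow> real) \<Rightarrow> real \<Rightarrow> real \<Rightarrow> real" where
  "oint h a b = (if a \<le> b then integral {a..b} h else - integral {b..a} h)"

definition Sprime :: "real \<Rightarrow> real \<Rightarrow> real \<Rightarrow> real \<Rightarrow> real \<Rightarrow> real \<Rightarrow> real" where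
  "Sprime lam lam0 lam1 mu y0 y =
     exp (- 2 * oint (\<lambda>u. (lam + (lam - lam1 + lam0) * u) / (mu\<^sup>2 * u\<^sup>2)) y0 y)"

definition Bfun :: "(real \<Rightarrow> real) \<Rightarrow> (real \<Rightarrow> real) \<Rightarrow> real \<Rightarrow> real" where
  "Bfun psi eta z = deriv psi z * eta z - psi z * deriv eta z"

text \<open>(G w)(r) = int_0^r 2 psi(z)/(sigma(z)^2 B(z)) (g + lam0 K w)(z) dz, sigma(z) = mu z.\<close>
definition Gop :: "real \<Rightarrow> real \<Rightarrow> real \<Rightarrow> real \<Rightarrow> real \<Rightarrow> 'e measure \<Rightarrow> 'e measure
    \<Rightarrow> (real \<Rightarrow> real) \<Rightarrow> (real \<Rightarrow> real) \<Rightarrow> (real \<Rightarrow> real) \<Rightarrow> real \<Rightarrow> real" where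
  "Gop lam lam0 lam1 mu c nu0 nu1 psi eta w r =
     integral {0..r} (\<lambda>z. 2 * psi z / ((mu * z)\<^sup>2 * Bfun psi eta z)
                          * (gfun lam c z + lam0 * Kop lam0 lam1 nu0 nu1 w z))"

definition supnorm :: "(real \<Rightarrow> real) \<Rightarrow> real" where
  "supnorm w = (SUP x\<in>{0..}. \<bar>w x\<bar>)"

end

theory Submission
  imports Defs
begin


lemma supnorm_bound:
  fixes w :: "real \<Rightarrow> real"
  assumes "bounded (w ` {0..})" "x \<ge> 0"
  shows "\<bar>w x\<bar> \<le> supnorm w"
proof -
  obtain B where B: "\<And>y. y \<in> w ` {0..} \<Longrightarrow> norm y \<le> B" using assms(1) bounded_iff by metis
  have "bdd_above ((\<lambda>x. \<bar>w x\<bar>) ` {0..})"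
    by (rule bdd_aboveI[where M=B]) (use B in auto)
  then show ?thesis unfolding supnorm_def using assms(2) by (intro cSUP_upper) auto
qed

lemma fRN_nonneg: "fRN nu0 nu1 z \<ge> 0" unfolding fRN_def by simp

lemma arg_nonneg:
  assumes "lam0 > 0" "lam1 > 0" "(\<phi>::real) \<ge> 0"
  shows "lam1 / lam0 * fRN nu0 nu1 z * \<phi> \<ge> 0"
  using assms fRN_nonneg[of nu0 nu1 z] by (intro mult_nonneg_nonneg divide_nonneg_nonneg) auto

lemma fRN_meas[measurable]: "fRN nu0 nu1 \<in> borel_measurable nu0"
  unfolding fRN_def by measurable

lemma wmax_cont:
  fixes w :: "real \<Rightarrow> real"
  assumes "continuous_on {0..} w"
  shows "continuous_on UNIV (\<lambda>x. w (max 0 x))"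
proof -
  have c: "continuous_on UNIV (\<lambda>x::real. max 0 x)" 
    by (rule continuous_on_max[OF continuous_on_const continuous_on_id])
  have s: "(\<lambda>x::real. max 0 x) ` UNIV \<subseteq> {0..}" by auto
  show ?thesis by (rule continuous_on_compose2[OF assms c s])
qed

lemma K_integrand_meas:
  fixes w :: "real \<Rightarrow> real"
  assumes "continuous_on {0..} w" "\<phi> \<ge> 0" "lam0 > 0" "lam1 > 0"
  shows "(\<lambda>z. w (lam1 / lam0 * fRN nu0 nu1 z * \<phi>)) \<in> borel_measurable nu0"
proof -
  have m: "(\<lambda>x. w (max 0 x)) \<in> borel_measurable borel"
    using wmax_cont[OF assms(1)] by (rule borel_measurable_continuous_onI)
  have f: "(\<lambda>z. lam1 / lam0 * fRN nu0 nu1 z * \<phi>) \<in> borel_measurable nu0"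
    using fRN_meas by simp
  have "(\<lambda>z. w (max 0 (lam1 / lam0 * fRN nu0 nu1 z * \<phi>))) \<in> borel_measurable nu0"
    using measurable_compose[OF f m] by simp
  moreover have "\<And>z. max 0 (lam1 / lam0 * fRN nu0 nu1 z * \<phi>) = lam1 / lam0 * fRN nu0 nu1 z * \<phi>"
    by (rule max_absorb2[OF arg_nonneg[OF assms(3,4,2)]])
  ultimately show ?thesis by simp
qed

lemma K_integrable:
  fixes w :: "real \<Rightarrow> real"
  assumes "prob_space nu0" "bounded (w ` {0..})" "continuous_on {0..} w" "\<phi> \<ge> 0" "lam0 > 0" "lam1 > 0"
  shows "integrable nu0 (\<lambda>z. w (lam1 / lam0 * fRN nu0 nu1 z * \<phi>))"
proof -
  interpret prob_space nu0 by fact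
  have "\<And>z. lam1 / lam0 * fRN nu0 nu1 z * \<phi> \<ge> 0"
    using arg_nonneg[OF assms(5,6,4)] by simp
  then have "AE x in nu0. norm (w (lam1 / lam0 * fRN nu0 nu1 x * \<phi>)) \<le> supnorm w"
    using supnorm_bound[OF assms(2)] by simp
  then show ?thesis
    by (rule integrable_const_bound[OF _ K_integrand_meas[OF assms(3-6)]])
qed

lemma K_le0:
  fixes w :: "real \<Rightarrow> real"
  assumes "prob_space nu0" "bounded (w ` {0..})" "continuous_on {0..} w" "\<phi> \<ge> 0" "lam0 > 0" "lam1 > 0"
    and "\<And>x. x \<ge> 0 \<Longrightarrow> w x \<le> 0"
  shows "Kop lam0 lam1 nu0 nu1 w \<phi> \<le> 0"
proof -
  have "Kop lam0 lam1 nu0 nu1 w \<phi> \<le> (\<integral>z. 0 \<partial>nu0)"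
    unfolding Kop_def
  proof (rule integral_mono[OF K_integrable[OF assms(1-6)] integrable_zero])
    fix z
    have "0 \<le> lam1 / lam0 * fRN nu0 nu1 z * \<phi>" by (rule arg_nonneg) (use assms in auto)
    then show "w (lam1 / lam0 * fRN nu0 nu1 z * \<phi>) \<le> 0" using assms(7) by blast
  qed
  then show ?thesis by simp
qed

lemma K_const:
  assumes "prob_space nu0"
  shows "Kop lam0 lam1 nu0 nu1 (\<lambda>_. d) \<phi> = d"
proof -
  interpret prob_space nu0 by fact
  show ?thesis unfolding Kop_def by (simp add: prob_space)
qed

lemma K_ge:
  fixes w :: "real \<Rightarrow> real"
  assumes "prob_space nu0" "bounded (w ` {0..})" "continuous_on {0..} w" "\<phi> \<ge> 0" "lam0 > 0" "lam1 > 0"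
  shows "Kop lam0 lam1 nu0 nu1 w \<phi> \<ge> - supnorm w"
proof -
  interpret prob_space nu0 by fact
  have "(\<integral>z. - supnorm w \<partial>nu0) \<le> Kop lam0 lam1 nu0 nu1 w \<phi>"
    unfolding Kop_def
  proof (rule integral_mono[OF integrable_const K_integrable[OF assms(1-6)]])
    fix z
    have "0 \<le> lam1 / lam0 * fRN nu0 nu1 z * \<phi>" by (rule arg_nonneg) (use assms in auto)
    then show "- supnorm w \<le> w (lam1 / lam0 * fRN nu0 nu1 z * \<phi>)"
      using abs_le_D2[OF supnorm_bound[OF assms(2)]] by fastforce
  qed
  then show ?thesis by (simp add: prob_space)
qed

lemma K_mono:
  fixes w :: "real \<Rightarrow> real"
  assumes "prob_space nu0" "bounded (w ` {0..})" "continuous_on {0..} w" "0 \<le> x" "x \<le> y" "lam0 > 0" "lam1 > 0"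
    and "mono_on {0..} w"
  shows "Kop lam0 lam1 nu0 nu1 w x \<le> Kop lam0 lam1 nu0 nu1 w y"
  unfolding Kop_def
proof (rule integral_mono[OF K_integrable[OF assms(1-3,4,6,7)] K_integrable[OF assms(1-3) _ assms(6,7)]])
  show "0 \<le> y" using assms by simp
  fix z
  have "lam1 / lam0 * fRN nu0 nu1 z * x \<le> lam1 / lam0 * fRN nu0 nu1 z * y"
    using assms fRN_nonneg[of nu0 nu1 z] by (intro mult_left_mono) auto
  moreover have "0 \<le> lam1 / lam0 * fRN nu0 nu1 z * y" by (rule arg_nonneg) (use assms in auto)
  moreover have "0 \<le> lam1 / lam0 * fRN nu0 nu1 z * x" by (rule arg_nonneg) (use assms in auto)
  ultimately show "w (lam1 / lam0 * fRN nu0 nu1 z * x) \<le> w (lam1 / lam0 * fRN nu0 nu1 z * y)"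
    by (intro mono_onD[OF assms(8)]) auto
qed

lemma K_cont:
  fixes w :: "real \<Rightarrow> real"
  assumes "prob_space nu0" "bounded (w ` {0..})" "continuous_on {0..} w" "lam0 > 0" "lam1 > 0"
  shows "continuous_on {0..} (Kop lam0 lam1 nu0 nu1 w)"
proof (rule continuous_on_sequentiallyI)
  interpret prob_space nu0 by fact
  fix u :: "nat \<Rightarrow> real" and a
  assume u: "\<forall>n. u n \<in> {0..}" and a: "a \<in> {0..}" and lim: "u \<longlonglongrightarrow> a"
  have ic: "isCont (\<lambda>x. w (max 0 x)) x" for x
    using wmax_cont[OF assms(3)] by (simp add: continuous_on_eq_continuous_at)
  show "(\<lambda>n. Kop lam0 lam1 nu0 nu1 w (u n)) \<longlonglongrightarrow> Kop lam0 lam1 nu0 nu1 w a"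
    unfolding Kop_def
  proof (rule integral_dominated_convergence[where w="\<lambda>_. supnorm w"])
    show "(\<lambda>z. w (lam1 / lam0 * fRN nu0 nu1 z * a)) \<in> borel_measurable nu0"
      using K_integrand_meas[OF assms(3) _ assms(4,5)] a by auto
    show "\<And>i. (\<lambda>z. w (lam1 / lam0 * fRN nu0 nu1 z * u i)) \<in> borel_measurable nu0"
      using K_integrand_meas[OF assms(3) _ assms(4,5)] u by auto
    show "integrable nu0 (\<lambda>_. supnorm w)" by simp
    show "\<And>i. AE z in nu0. norm (w (lam1 / lam0 * fRN nu0 nu1 z * u i)) \<le> supnorm w"
    proof (intro AE_I2)
      fix i z
      have "0 \<le> lam1 / lam0 * fRN nu0 nu1 z * u i" by (rule arg_nonneg) (use assms u in auto)
      then show "norm (w (lam1 / lam0 * fRN nu0 nu1 z * u i)) \<le> supnorm w"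
        using supnorm_bound[OF assms(2)] by simp
    qed
    show "AE z in nu0. (\<lambda>i. w (lam1 / lam0 * fRN nu0 nu1 z * u i)) \<longlonglongrightarrow> w (lam1 / lam0 * fRN nu0 nu1 z * a)"
    proof (rule AE_I2)
      fix z
      have "(\<lambda>i. lam1 / lam0 * fRN nu0 nu1 z * u i) \<longlonglongrightarrow> lam1 / lam0 * fRN nu0 nu1 z * a"
        by (intro tendsto_mult tendsto_const lim)
      then have "(\<lambda>i. w (max 0 (lam1 / lam0 * fRN nu0 nu1 z * u i))) \<longlonglongrightarrow> w (max 0 (lam1 / lam0 * fRN nu0 nu1 z * a))"
        by (rule isCont_tendsto_compose[OF ic])
      moreover have "\<And>i. max 0 (lam1 / lam0 * fRN nu0 nu1 z * u i) = lam1 / lam0 * fRN nu0 nu1 z * u i"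
        by (rule max_absorb2, rule arg_nonneg) (use assms u in auto)
      moreover have "max 0 (lam1 / lam0 * fRN nu0 nu1 z * a) = lam1 / lam0 * fRN nu0 nu1 z * a"
        by (rule max_absorb2, rule arg_nonneg) (use assms a in auto)
      ultimately show "(\<lambda>i. w (lam1 / lam0 * fRN nu0 nu1 z * u i)) \<longlonglongrightarrow> w (lam1 / lam0 * fRN nu0 nu1 z * a)"
        by simp
    qed
  qed
qed



lemma deriv_nonneg_mono:
  fixes f :: "real \<Rightarrow> real"
  assumes "DERIV f x :> l" "mono_on {0<..} f" "x > 0"
  shows "l \<ge> 0"
proof (rule ccontr)
  assume "\<not> l \<ge> 0"
  then obtain d where d: "d > 0" "\<And>h. h > 0 \<Longrightarrow> h < d \<Longrightarrow> f x > f (x + h)"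
    using DERIV_neg_dec_right[OF assms(1)] by force
  have "f x \<le> f (x + d/2)" using assms d by (intro mono_onD[OF assms(2)]) auto
  with d(2)[of "d/2"] d(1) show False by auto
qed

lemma deriv_nonpos_antimono:
  fixes f :: "real \<Rightarrow> real"
  assumes "DERIV f x :> l" "antimono_on {0<..} f" "x > 0"
  shows "l \<le> 0"
proof (rule ccontr)
  assume "\<not> l \<le> 0"
  then obtain d where d: "d > 0" "\<And>h. h > 0 \<Longrightarrow> h < d \<Longrightarrow> f x < f (x + h)"
    using DERIV_pos_inc_right[OF assms(1)] by force
  have "f x \<ge> f (x + d/2)" using assms d by (intro monotone_onD[OF assms(2)]) auto
  with d(2)[of "d/2"] d(1) show False by auto
qed

locale setting =
  fixes lam lam0 lam1 mu c y0 :: real and psi eta :: "real \<Rightarrow> real"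
  assumes lam_pos: "lam > 0" and lam0_pos: "lam0 > 0" and lam1_pos: "lam1 > 0"
    and mu_nz: "mu \<noteq> 0" and c_pos: "c > 0" and y0_pos: "y0 > 0"
    and psi_diff: "\<And>y. y > 0 \<Longrightarrow> psi differentiable (at y) \<and> deriv psi differentiable (at y)"
    and eta_diff: "\<And>y. y > 0 \<Longrightarrow> eta differentiable (at y) \<and> deriv eta differentiable (at y)"
    and psi_ode: "\<And>y. y > 0 \<Longrightarrow> A0op lam lam0 lam1 mu psi y = (lam + lam0) * psi y"
    and eta_ode: "\<And>y. y > 0 \<Longrightarrow> A0op lam lam0 lam1 mu eta y = (lam + lam0) * eta y"
    and psi_pos: "\<And>y. y > 0 \<Longrightarrow> psi y > 0"
    and eta_pos: "\<And>y. y > 0 \<Longrightarrow> eta y > 0"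
    and psi_incr: "mono_on {0<..} psi"
    and eta_decr: "antimono_on {0<..} eta"
    and psi_inf: "filterlim psi at_top at_top"
    and eta_inf: "(eta \<longlongrightarrow> 0) at_top"
    and psi_S: "filterlim (\<lambda>y. deriv psi y / Sprime lam lam0 lam1 mu y0 y) at_top at_top"
begin

definition "aa = lam - lam1 + lam0"
definition "p y = 2 * (lam + aa * y) / (mu\<^sup>2 * y\<^sup>2)"

lemma d1: "y > 0 \<Longrightarrow> DERIV psi y :> deriv psi y"
  using psi_diff DERIV_deriv_iff_real_differentiable by blast
lemma d2: "y > 0 \<Longrightarrow> DERIV (deriv psi) y :> deriv (deriv psi) y"
  using psi_diff DERIV_deriv_iff_real_differentiable by blast
lemma e1: "y > 0 \<Longrightarrow> DERIV eta y :> deriv eta y"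
  using eta_diff DERIV_deriv_iff_real_differentiable by blast
lemma e2: "y > 0 \<Longrightarrow> DERIV (deriv eta) y :> deriv (deriv eta) y"
  using eta_diff DERIV_deriv_iff_real_differentiable by blast

lemma ode2:
  assumes "y > 0" "A0op lam lam0 lam1 mu f y = (lam + lam0) * f y"
  shows "deriv (deriv f) y = 2 * (lam + lam0) * f y / (mu\<^sup>2 * y\<^sup>2) - p y * deriv f y"
proof -
  have "mu\<^sup>2 / 2 * y\<^sup>2 * deriv (deriv f) y + (lam + aa * y) * deriv f y = (lam + lam0) * f y"
    using assms(2) unfolding A0op_def aa_def by simp
  then have eq2: "deriv (deriv f) y * (mu\<^sup>2 * y\<^sup>2) = 2*(lam+lam0)*f y - 2*(lam+aa*y)*deriv f y"
    by (simp add: algebra_simps)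
  have nz: "mu\<^sup>2 * y\<^sup>2 \<noteq> 0" using mu_nz assms(1) by simp
  have "deriv (deriv f) y = (2*(lam+lam0)*f y - 2*(lam+aa*y)*deriv f y) / (mu\<^sup>2 * y\<^sup>2)"
    using eq2 nz by (simp add: eq_divide_eq)
  also have "\<dots> = 2 * (lam + lam0) * f y / (mu\<^sup>2 * y\<^sup>2) - p y * deriv f y"
    unfolding p_def by (simp add: diff_divide_distrib)
  finally show ?thesis .
qed

lemma psi'_nonneg: "y > 0 \<Longrightarrow> deriv psi y \<ge> 0"
  using deriv_nonneg_mono[OF d1 psi_incr] by blast
lemma eta'_nonpos: "y > 0 \<Longrightarrow> deriv eta y \<le> 0"
  using deriv_nonpos_antimono[OF e1 eta_decr] by blast

lemma B_nonneg: "y > 0 \<Longrightarrow> Bfun psi eta y \<ge> 0"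
  unfolding Bfun_def using psi'_nonneg[of y] eta'_nonpos[of y] psi_pos[of y] eta_pos[of y]
  by (smt (verit) mult_nonneg_nonneg mult_nonneg_nonpos)

lemma B_deriv:
  assumes "y > 0"
  shows "DERIV (Bfun psi eta) y :> - p y * Bfun psi eta y"
proof -
  have "DERIV (\<lambda>y. deriv psi y * eta y - psi y * deriv eta y) y :>
     (deriv (deriv psi) y * eta y + deriv psi y * deriv eta y) - (deriv psi y * deriv eta y + psi y * deriv (deriv eta) y)"
  proof (rule DERIV_diff)
    show "DERIV (\<lambda>y. deriv psi y * eta y) y :> deriv (deriv psi) y * eta y + deriv psi y * deriv eta y"
      by (rule DERIV_cong[OF DERIV_mult[OF d2[OF assms] e1[OF assms]]]) (simp add: algebra_simps)
    show "DERIV (\<lambda>y. psi y * deriv eta y) y :> deriv psi y * deriv eta y + psi y * deriv (deriv eta) y"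
      by (rule DERIV_cong[OF DERIV_mult[OF d1[OF assms] e2[OF assms]]]) (simp add: algebra_simps)
  qed
  moreover have "(deriv (deriv psi) y * eta y + deriv psi y * deriv eta y) - (deriv psi y * deriv eta y + psi y * deriv (deriv eta) y)
       = - p y * Bfun psi eta y"
    unfolding Bfun_def ode2[OF assms psi_ode[OF assms]] ode2[OF assms eta_ode[OF assms]]
    by (simp add: algebra_simps)
  moreover have "Bfun psi eta = (\<lambda>y. deriv psi y * eta y - psi y * deriv eta y)"
    by (rule ext) (simp add: Bfun_def)
  ultimately show ?thesis by simp
qed

definition "F u = - lam / (mu\<^sup>2 * u) + aa / mu\<^sup>2 * ln u"

lemma F_deriv:
  assumes "u > 0"
  shows "DERIV F u :> (lam + aa * u) / (mu\<^sup>2 * u\<^sup>2)"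
proof -
  have "DERIV (\<lambda>u. - lam / (mu\<^sup>2 * u) + aa / mu\<^sup>2 * ln u) u :>
      - (- lam * (mu\<^sup>2 * 1) / (mu\<^sup>2 * u)\<^sup>2) + aa / mu\<^sup>2 * (1 / u)"
    using assms mu_nz by (intro derivative_eq_intros) (auto simp: power2_eq_square)
  moreover have "- (- lam * (mu\<^sup>2 * 1) / (mu\<^sup>2 * u)\<^sup>2) + aa / mu\<^sup>2 * (1 / u) = (lam + aa * u) / (mu\<^sup>2 * u\<^sup>2)"
    using assms mu_nz by (simp add: field_simps power2_eq_square)
  ultimately show ?thesis unfolding F_def[abs_def] by simp
qed

lemma oint_F:
  assumes "y > 0"
  shows "oint (\<lambda>u. (lam + (lam - lam1 + lam0) * u) / (mu\<^sup>2 * u\<^sup>2)) y0 y = F y - F y0"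
proof -
  have ftc: "((\<lambda>u. (lam + (lam - lam1 + lam0) * u) / (mu\<^sup>2 * u\<^sup>2)) has_integral (F b - F a)) {a..b}"
    if "0 < a" "a \<le> b" for a b
  proof (rule fundamental_theorem_of_calculus[OF that(2)])
    fix x assume "x \<in> {a..b}"
    then have "x > 0" using that by auto
    then show "(F has_vector_derivative (lam + (lam - lam1 + lam0) * x) / (mu\<^sup>2 * x\<^sup>2)) (at x within {a..b})"
      using F_deriv[of x] unfolding aa_def
      by (simp add: has_real_derivative_iff_has_vector_derivative has_vector_derivative_at_within)
  qed
  show ?thesis
  proof (cases "y0 \<le> y")
    case True
    then show ?thesis unfolding oint_def using ftc[OF y0_pos True] by (simp add: integral_unique)
  next
    case False
    then show ?thesis unfolding oint_def using ftc[OF assms, of y0] by (simp add: integral_unique)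
  qed
qed

lemma S_eq: "y > 0 \<Longrightarrow> Sprime lam lam0 lam1 mu y0 y = exp (- 2 * (F y - F y0))"
  unfolding Sprime_def using oint_F by simp

lemma S_pos: "y > 0 \<Longrightarrow> Sprime lam lam0 lam1 mu y0 y > 0"
  using S_eq by simp

lemma S_deriv:
  assumes "y > 0"
  shows "DERIV (Sprime lam lam0 lam1 mu y0) y :> - p y * Sprime lam lam0 lam1 mu y0 y"
proof -
  have g: "DERIV (\<lambda>y. -2 * (F y - F y0)) y :> -2 * ((lam + aa * y) / (mu\<^sup>2 * y\<^sup>2) - 0)"
    by (intro DERIV_cmult DERIV_diff F_deriv assms DERIV_const)
  have D: "DERIV (\<lambda>y. exp (-2 * (F y - F y0))) y :> exp (-2 * (F y - F y0)) * (-2 * ((lam + aa * y) / (mu\<^sup>2 * y\<^sup>2) - 0))"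
    by (rule DERIV_chain2[OF DERIV_exp g])
  have E: "exp (-2 * (F y - F y0)) * (-2 * ((lam + aa * y) / (mu\<^sup>2 * y\<^sup>2) - 0)) = - p y * Sprime lam lam0 lam1 mu y0 y"
    unfolding S_eq[OF assms] p_def by (simp add: divide_simps) (simp add: algebra_simps)
  have D2: "DERIV (\<lambda>y. exp (-2 * (F y - F y0))) y :> - p y * Sprime lam lam0 lam1 mu y0 y"
    using D E by simp
  show ?thesis
  proof (rule has_field_derivative_transform_within_open[OF D2])
    show "open {0::real<..}" by simp
    show "y \<in> {0<..}" using assms by simp
    fix x :: real assume "x \<in> {0<..}"
    then show "exp (-2 * (F x - F y0)) = Sprime lam lam0 lam1 mu y0 x" using S_eq by simp
  qed
qed

abbreviation "S \<equiv> Sprime lam lam0 lam1 mu y0"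
abbreviation "B \<equiv> Bfun psi eta"

lemma BS_const: "\<exists>k. \<forall>y\<in>{0<..}. B y / S y = k"
proof (rule has_field_derivative_zero_constant)
  show "convex {0::real<..}" by (rule convex_real_interval)
  fix y :: real assume "y \<in> {0<..}"
  then have y: "y > 0" by simp
  have Sn: "S y \<noteq> 0" using S_pos[OF y] by simp
  have D: "DERIV (\<lambda>y. B y / S y) y :> ((- p y * B y) * S y - B y * (- p y * S y)) / (S y * S y)"
    by (rule DERIV_divide[OF B_deriv[OF y] S_deriv[OF y] Sn])
  have Z: "((- p y * B y) * S y - B y * (- p y * S y)) = 0" by (simp add: algebra_simps)
  have "DERIV (\<lambda>y. B y / S y) y :> 0"
    by (rule DERIV_cong[OF D]) (simp only: Z div_0)
  then show "((\<lambda>y. B y / S y) has_field_derivative 0) (at y within {0<..})"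
    by (rule has_field_derivative_at_within)
qed

lemma B_pos: "y > 0 \<Longrightarrow> B y > 0"
proof -
  obtain k where k: "\<And>y. y > 0 \<Longrightarrow> B y / S y = k" using BS_const by auto
  have Beq: "\<And>y. y > 0 \<Longrightarrow> B y = k * S y"
    using k S_pos by (fastforce simp: divide_eq_eq)
  have "k \<ge> 0" using k[OF y0_pos] B_nonneg[OF y0_pos] S_pos[OF y0_pos] by auto
  moreover have "k \<noteq> 0"
  proof
    assume k0: "k = 0"
    have "\<exists>m. \<forall>y\<in>{0<..}. psi y / eta y = m"
    proof (rule has_field_derivative_zero_constant)
      show "convex {0::real<..}" by (rule convex_real_interval)
      fix y :: real assume "y \<in> {0<..}"
      then have y: "y > 0" by simp
      have D: "DERIV (\<lambda>y. psi y / eta y) y :> (deriv psi y * eta y - psi y * deriv eta y) / (eta y * eta y)"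
        by (rule DERIV_divide[OF d1[OF y] e1[OF y]]) (use eta_pos[OF y] in simp)
      have Z: "deriv psi y * eta y - psi y * deriv eta y = 0"
        using Beq[OF y] k0 unfolding Bfun_def by simp
      have "DERIV (\<lambda>y. psi y / eta y) y :> 0"
        by (rule DERIV_cong[OF D]) (simp only: Z div_0)
      then show "((\<lambda>y. psi y / eta y) has_field_derivative 0) (at y within {0<..})"
        by (rule has_field_derivative_at_within)
    qed
    then obtain m where m: "\<And>y. y > 0 \<Longrightarrow> psi y / eta y = m" by auto
    have ev: "eventually (\<lambda>y. m * eta y = psi y) at_top"
      using eventually_gt_at_top[of 0]
    proof eventually_elim
      case (elim y)
      have "eta y \<noteq> 0" using eta_pos[OF elim] by simp
      then have "psi y = (psi y / eta y) * eta y" by simp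
      then show ?case using m[OF elim] by simp
    qed
    have "((\<lambda>y. m * eta y) \<longlongrightarrow> m * 0) at_top"
      by (intro tendsto_mult tendsto_const eta_inf)
    then have t0: "((\<lambda>y. m * eta y) \<longlongrightarrow> 0) at_top" by simp
    have t: "(psi \<longlongrightarrow> 0) at_top" by (rule Lim_transform_eventually[OF t0 ev])
    have fi: "filterlim psi at_infinity at_top"
      by (rule filterlim_at_top_imp_at_infinity[OF psi_inf])
    have nb: "(at_top::real filter) \<noteq> bot" using trivial_limit_at_top_linorder by blast
    show False by (rule not_tendsto_and_filterlim_at_infinity[OF nb t fi])
  qed
  ultimately have "k > 0" by simp
  then show "y > 0 \<Longrightarrow> B y > 0" using Beq S_pos by simp
qed

lemma B_S: "\<exists>k>0. \<forall>y>0. B y = k * S y"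
proof -
  obtain k where k: "\<And>y. y > 0 \<Longrightarrow> B y / S y = k" using BS_const by auto
  have Beq: "\<And>y. y > 0 \<Longrightarrow> B y = k * S y"
    using k S_pos by (fastforce simp: divide_eq_eq)
  have "k > 0" using k[OF y0_pos] B_pos[OF y0_pos] S_pos[OF y0_pos] by auto
  then show ?thesis using Beq by blast
qed

definition "h y = 2 * psi y / ((mu * y)\<^sup>2 * Bfun psi eta y)"
definition "V y = deriv psi y / Bfun psi eta y"

lemma h_pos: "y > 0 \<Longrightarrow> h y > 0"
  unfolding h_def using psi_pos B_pos mu_nz by (simp add: divide_pos_pos)

lemma V_deriv:
  assumes y: "y > 0"
  shows "DERIV V y :> (lam + lam0) * h y"
proof -
  have "DERIV V y :> (deriv (deriv psi) y * B y - deriv psi y * (- p y * B y)) / (B y * B y)"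
    unfolding V_def[abs_def] by (rule DERIV_divide[OF d2[OF y] B_deriv[OF y]]) (use B_pos[OF y] in simp)
  moreover have "(deriv (deriv psi) y * B y - deriv psi y * (- p y * B y)) / (B y * B y) = (lam + lam0) * h y"
  proof -
    have nz: "B y \<noteq> 0" using B_pos[OF y] by simp
    have "(deriv (deriv psi) y * B y - deriv psi y * (- p y * B y)) = (deriv (deriv psi) y + p y * deriv psi y) * B y"
      by (simp add: algebra_simps)
    also have "deriv (deriv psi) y + p y * deriv psi y = 2 * (lam + lam0) * psi y / (mu\<^sup>2 * y\<^sup>2)"
      using ode2[OF y psi_ode[OF y]] by simp
    finally have "(deriv (deriv psi) y * B y - deriv psi y * (- p y * B y)) / (B y * B y)
        = 2 * (lam + lam0) * psi y / (mu\<^sup>2 * y\<^sup>2) / B y"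
      using nz by simp
    also have "\<dots> = (lam + lam0) * h y" unfolding h_def by (simp add: power_mult_distrib)
    finally show ?thesis .
  qed
  ultimately show ?thesis by simp
qed

lemma V_nonneg: "y > 0 \<Longrightarrow> V y \<ge> 0"
  unfolding V_def using psi'_nonneg B_pos by (simp add: less_imp_le)

lemma V_mono: assumes "0 < x" "x \<le> y" shows "V x \<le> V y"
proof (rule DERIV_nonneg_imp_increasing_open[OF assms(2)])
  fix t assume "x < t" "t < y"
  then show "\<exists>d. DERIV V t :> d \<and> d \<ge> 0"
  proof (intro exI conjI)
    have "t > 0" using assms \<open>x < t\<close> by simp
    then show "DERIV V t :> (lam+lam0) * h t" "(lam+lam0) * h t \<ge> 0"
      using V_deriv[of t] h_pos[of t] lam_pos lam0_pos by auto
  qed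
next
  show "continuous_on {x..y} V"
  proof (rule continuous_at_imp_continuous_on, rule ballI)
    fix t assume "t \<in> {x..y}"
    then have "t > 0" using assms by auto
    then show "isCont V t" by (rule DERIV_isCont[OF V_deriv])
  qed
qed

lemma V_top: "filterlim V at_top at_top"
proof -
  obtain k where k1: "k > 0" and k2: "\<forall>y>0. B y = k * S y" using B_S by blast
  have k: "k > 0" "\<And>y. y > 0 \<Longrightarrow> B y = k * S y" using k1 k2 by auto
  have fl: "filterlim (\<lambda>y. (1/k) * (deriv psi y / S y)) at_top at_top"
    by (rule filterlim_tendsto_pos_mult_at_top[OF tendsto_const _ psi_S]) (use k in simp)
  have ev: "eventually (\<lambda>y. (1/k) * (deriv psi y / S y) = V y) at_top"
    using eventually_gt_at_top[of 0]
  proof eventually_elim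
    case (elim y)
    have "V y = deriv psi y / (k * S y)" unfolding V_def using k(2)[OF elim] by simp
    then show ?case by simp
  qed
  show ?thesis using filterlim_cong[OF refl refl ev] fl by blast
qed


definition "L0 = Inf (V ` {0<..})"

lemma bddV: "bdd_below (V ` {0<..})"
  by (rule bdd_belowI[where m=0]) (auto intro: V_nonneg)

lemma L0_le: "y > 0 \<Longrightarrow> L0 \<le> V y"
  unfolding L0_def by (rule cINF_lower[OF bddV]) simp

lemma L0_lim: "(V \<longlongrightarrow> L0) (at_right 0)"
proof (rule decreasing_tendsto)
  show "eventually (\<lambda>n. L0 \<le> V n) (at_right 0)"
    unfolding eventually_at_right_field by (intro exI[of _ 1]) (auto intro: L0_le)
  fix x assume "L0 < x"
  then obtain v where "v \<in> V ` {0<..}" "v < x"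
    using cInf_less_iff[OF _ bddV] unfolding L0_def by auto
  then obtain y1 where y1: "y1 > 0" "V y1 < x" by auto
  show "eventually (\<lambda>n. V n < x) (at_right 0)"
    unfolding eventually_at_right_field
  proof (intro exI[of _ y1] conjI allI impI)
    show "y1 > 0" by fact
    fix n :: real assume "n > 0" "n < y1"
    then have "V n \<le> V y1" by (intro V_mono) auto
    then show "V n < x" using y1 by simp
  qed
qed

definition "Ve y = (if y \<le> 0 then L0 else V y)"

lemma Ve_deriv:
  assumes "y > 0" shows "DERIV Ve y :> (lam + lam0) * h y"
proof (rule has_field_derivative_transform_within_open[OF V_deriv[OF assms]])
  show "open {0::real<..}" by simp
  show "y \<in> {0<..}" using assms by simp
  fix x :: real assume "x \<in> {0<..}"
  then show "V x = Ve x" unfolding Ve_def by simp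
qed

lemma Ve_cont: "continuous_on {0..} Ve"
  unfolding continuous_on_eq_continuous_within
proof (rule ballI)
  fix x :: real assume x: "x \<in> {0..}"
  show "continuous (at x within {0..}) Ve"
  proof (cases "x = 0")
    case True
    have ev: "eventually (\<lambda>n. V n = Ve n) (at_right 0)"
      unfolding eventually_at_right_field by (intro exI[of _ 1]) (auto simp: Ve_def)
    have t: "(Ve \<longlongrightarrow> L0) (at_right 0)" by (rule Lim_transform_eventually[OF L0_lim ev])
    have v0: "Ve 0 = L0" by (simp add: Ve_def)
    have "(Ve \<longlongrightarrow> Ve 0) (at 0 within {0..})"
      unfolding at_within_Ici_at_right v0 by (rule t)
    then show ?thesis using True by (simp only: continuous_within)
  next
    case False
    then have "x > 0" using x by simp
    then show ?thesis
      by (rule continuous_at_imp_continuous_at_within[OF DERIV_isCont[OF Ve_deriv]])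
  qed
qed

lemma h_int:
  assumes "0 \<le> s" "s \<le> r"
  shows "(h has_integral (Ve r - Ve s) / (lam + lam0)) {s..r}"
proof -
  have "((\<lambda>x. (lam + lam0) * h x) has_integral (Ve r - Ve s)) {s..r}"
  proof (rule fundamental_theorem_of_calculus_interior[OF assms(2)])
    show "continuous_on {s..r} Ve" by (rule continuous_on_subset[OF Ve_cont]) (use assms in auto)
    fix x assume "x \<in> {s<..<r}"
    then have "x > 0" using assms by simp
    then show "(Ve has_vector_derivative (lam + lam0) * h x) (at x)"
      using Ve_deriv has_real_derivative_iff_has_vector_derivative by blast
  qed
  then have "((\<lambda>x. 1 / (lam + lam0) * ((lam + lam0) * h x)) has_integral 1 / (lam + lam0) * (Ve r - Ve s)) {s..r}"
    by (rule has_integral_mult_right)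
  moreover have "(\<lambda>x. 1 / (lam + lam0) * ((lam + lam0) * h x)) = h"
    using lam_pos lam0_pos by (intro ext) simp
  moreover have "1 / (lam + lam0) * (Ve r - Ve s) = (Ve r - Ve s) / (lam + lam0)" by simp
  ultimately show ?thesis by (simp only:)
qed

lemma Ve_mono: assumes "0 \<le> s" "s \<le> r" shows "Ve s \<le> Ve r"
  using assms L0_le V_mono unfolding Ve_def by auto

lemma Ve_top: "filterlim Ve at_top at_top"
proof -
  have ev: "eventually (\<lambda>y. V y = Ve y) at_top"
    using eventually_gt_at_top[of 0] by eventually_elim (simp add: Ve_def)
  show ?thesis using filterlim_cong[OF refl refl ev] V_top by blast
qed

end


locale wsetting = setting lam lam0 lam1 mu c y0 psi eta
  for lam lam0 lam1 mu c y0 :: real and psi eta :: "real \<Rightarrow> real" +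
  fixes nu0 nu1 :: "'e measure" and w :: "real \<Rightarrow> real"
  assumes nu0: "prob_space nu0"
    and w_bdd: "bounded (w ` {0..})"
    and w_cont: "continuous_on {0..} w"
    and w_mono: "mono_on {0..} w"
    and w_nonpos: "\<And>x. x \<ge> 0 \<Longrightarrow> w x \<le> 0"
begin

definition "q z = gfun lam c z + lam0 * Kop lam0 lam1 nu0 nu1 w z"
definition "G r = Gop lam lam0 lam1 mu c nu0 nu1 psi eta w r"

lemma G_eq: "G r = integral {0..r} (\<lambda>z. h z * q z)"
  unfolding G_def Gop_def h_def q_def ..

lemma q_cont: "continuous_on {0..} q"
proof -
  have "continuous_on {0..} (\<lambda>z. (z - lam / c) + lam0 * Kop lam0 lam1 nu0 nu1 w z)"
    by (intro continuous_intros K_cont[OF nu0 w_bdd w_cont lam0_pos lam1_pos])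
  then show ?thesis unfolding q_def gfun_def by simp
qed

lemma q_strict: assumes "0 \<le> x" "x < y" shows "q x < q y"
proof -
  have "Kop lam0 lam1 nu0 nu1 w x \<le> Kop lam0 lam1 nu0 nu1 w y"
    using assms by (intro K_mono[OF nu0 w_bdd w_cont _ _ lam0_pos lam1_pos w_mono]) auto
  then have "lam0 * Kop lam0 lam1 nu0 nu1 w x \<le> lam0 * Kop lam0 lam1 nu0 nu1 w y"
    using lam0_pos by (intro mult_left_mono) auto
  then show ?thesis unfolding q_def gfun_def using assms by simp
qed

lemma q_upper: "z \<ge> 0 \<Longrightarrow> q z \<le> z - lam / c"
  unfolding q_def gfun_def using K_le0[OF nu0 w_bdd w_cont _ lam0_pos lam1_pos w_nonpos, of z] lam0_pos
  by (simp add: mult_nonneg_nonpos)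

lemma q_lower: "z \<ge> 0 \<Longrightarrow> q z \<ge> z - lam / c - lam0 * supnorm w"
proof -
  assume z: "z \<ge> 0"
  have "lam0 * (- supnorm w) \<le> lam0 * Kop lam0 lam1 nu0 nu1 w z"
    using K_ge[OF nu0 w_bdd w_cont z lam0_pos lam1_pos, of nu1] lam0_pos
    by (intro mult_left_mono) auto
  then show ?thesis unfolding q_def gfun_def by simp
qed

lemma q0_neg: "q 0 < 0"
proof -
  have "lam / c > 0" using lam_pos c_pos by simp
  then show ?thesis using q_upper[of 0] by simp
qed

lemma supnorm_nonneg: "supnorm w \<ge> 0"
  using supnorm_bound[OF w_bdd, of 0] by simp

lemma phil_ex1: "\<exists>!phi. phi \<ge> 0 \<and> q phi = 0"
proof -
  define R where "R = lam / c + lam0 * supnorm w + 1"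
  have R: "R \<ge> 0" unfolding R_def using lam_pos c_pos lam0_pos supnorm_nonneg by simp
  have "q R \<ge> 1" using q_lower[OF R] unfolding R_def by simp
  then obtain x where x: "0 \<le> x" "x \<le> R" "q x = 0"
    using IVT'[of q 0 0 R] q0_neg R continuous_on_subset[OF q_cont, of "{0..R}"] by force
  show ?thesis
  proof (rule ex1I[of _ x])
    show "0 \<le> x \<and> q x = 0" using x by simp
    fix y assume y: "0 \<le> y \<and> q y = 0"
    show "y = x"
    proof (rule ccontr)
      assume "y \<noteq> x"
      then have "y < x \<or> x < y" by auto
      then show False using q_strict[of y x] q_strict[of x y] x y by auto
    qed
  qed
qed

definition "phil = (THE phi. phi \<ge> 0 \<and> q phi = 0)"

lemma phil: "phil \<ge> 0" "q phil = 0"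
  using theI'[OF phil_ex1] unfolding phil_def by auto

lemma phil_pos: "phil > 0"
  using phil q0_neg by (cases "phil = 0") auto

lemma q_neg: "0 \<le> x \<Longrightarrow> x < phil \<Longrightarrow> q x < 0"
  using q_strict[of x phil] phil by simp
lemma q_pos: "phil < x \<Longrightarrow> q x > 0"
  using q_strict[of phil x] phil by simp


lemma h_nonneg: "z \<ge> 0 \<Longrightarrow> h z \<ge> 0"
  using h_pos[of z] by (cases "z = 0") (auto simp: h_def)

lemma h_integrable: "r \<ge> 0 \<Longrightarrow> h integrable_on {0..r}"
  using h_int[of 0 r] by blast

lemma gq_absint:
  assumes "r \<ge> 0" shows "(\<lambda>z. h z * q z) absolutely_integrable_on {0..r}"
proof -
  have qc: "continuous_on {0..r} q" by (rule continuous_on_subset[OF q_cont]) auto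
  have "(\<lambda>x. q x * h x) absolutely_integrable_on {0..r}"
  proof (rule absolutely_integrable_bounded_measurable_product_real)
    show "q \<in> borel_measurable (lebesgue_on {0..r})"
      by (rule continuous_imp_measurable_on_sets_lebesgue[OF qc]) simp
    show "{0..r} \<in> sets lebesgue" by simp
    show "bounded (q ` {0..r})"
      by (rule compact_imp_bounded[OF compact_continuous_image[OF qc compact_Icc]])
    show "h absolutely_integrable_on {0..r}"
      by (rule nonnegative_absolutely_integrable_1[OF h_integrable[OF assms]]) (auto intro: h_nonneg)
  qed
  then show ?thesis by (simp add: mult.commute)
qed

lemma gq_int: "r \<ge> 0 \<Longrightarrow> (\<lambda>z. h z * q z) integrable_on {0..r}"
  using gq_absint absolutely_integrable_on_def by blast

lemma G_cont: assumes "R \<ge> 0" shows "continuous_on {0..R} G"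
proof -
  have "continuous_on {0..R} (\<lambda>x. integral {0..x} (\<lambda>z. h z * q z))"
    by (rule indefinite_integral_continuous_1[OF gq_int[OF assms]])
  moreover have "G = (\<lambda>x. integral {0..x} (\<lambda>z. h z * q z))" by (rule ext) (rule G_eq)
  ultimately show ?thesis by simp
qed

lemma h_cont_at: assumes "z > 0" shows "isCont h z"
proof -
  have cp: "isCont psi z" by (rule DERIV_isCont[OF d1[OF assms]])
  have cB: "isCont B z" by (rule DERIV_isCont[OF B_deriv[OF assms]])
  have nz: "(mu * z)\<^sup>2 * B z \<noteq> 0" using B_pos[OF assms] mu_nz assms by simp
  have "isCont (\<lambda>z. 2 * psi z / ((mu * z)\<^sup>2 * B z)) z"
    using cp cB nz by (intro continuous_intros) auto
  then show ?thesis unfolding h_def[abs_def] .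
qed

lemma q_cont_at: "z > 0 \<Longrightarrow> isCont q z"
  by (rule continuous_on_interior[OF q_cont]) simp

lemma G_deriv:
  assumes x: "x > 0" shows "DERIV G x :> h x * q x"
proof -
  define s where "s = x / 2"
  define R where "R = 2 * x"
  have sR: "0 < s" "s < x" "x < R" unfolding s_def R_def using x by auto
  have cont: "continuous_on {s..R} (\<lambda>z. h z * q z)"
  proof (rule continuous_at_imp_continuous_on, rule ballI)
    fix z assume "z \<in> {s..R}"
    then have z: "z > 0" using sR by auto
    show "isCont (\<lambda>z. h z * q z) z" by (rule continuous_mult[OF h_cont_at[OF z] q_cont_at[OF z]])
  qed
  have D1: "((\<lambda>u. integral {s..u} (\<lambda>z. h z * q z)) has_vector_derivative (h x * q x)) (at x within {s..R})"
    by (rule integral_has_vector_derivative[OF cont]) (use sR in auto)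
  have "at x within {s..R} = at x" by (rule at_within_interior) (use sR in simp)
  with D1 have D2: "((\<lambda>u. integral {s..u} (\<lambda>z. h z * q z)) has_real_derivative (h x * q x)) (at x)"
    by (simp add: has_real_derivative_iff_has_vector_derivative)
  have D3: "DERIV (\<lambda>u. G s + integral {s..u} (\<lambda>z. h z * q z)) x :> h x * q x"
    by (rule DERIV_cong[OF DERIV_add[OF DERIV_const D2]]) simp
  show ?thesis
  proof (rule has_field_derivative_transform_within_open[OF D3])
    show "open {s<..<R}" by simp
    show "x \<in> {s<..<R}" using sR by simp
    fix u assume "u \<in> {s<..<R}"
    then have u: "s \<le> u" using sR by simp
    show "G s + integral {s..u} (\<lambda>z. h z * q z) = G u"
    proof -
      have "integral {0..s} (\<lambda>z. h z * q z) + integral {s..u} (\<lambda>z. h z * q z) = integral {0..u} (\<lambda>z. h z * q z)"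
        by (rule Henstock_Kurzweil_Integration.integral_combine) (use sR u gq_int[of u] in auto)
      then show ?thesis unfolding G_eq .
    qed
  qed
qed

lemma G0: "G 0 = 0" unfolding G_eq by simp

lemma G_neg: assumes "0 < r" "r \<le> phil" shows "G r < 0"
proof -
  have "G 0 > G r"
  proof (rule DERIV_neg_imp_decreasing_open[OF assms(1)])
    fix t assume t: "0 < t" "t < r"
    show "\<exists>y. DERIV G t :> y \<and> y < 0"
    proof (intro exI conjI)
      show "DERIV G t :> h t * q t" by (rule G_deriv) (use t in simp)
      show "h t * q t < 0" using h_pos[of t] q_neg[of t] t assms by (simp add: mult_pos_neg)
    qed
  next
    show "continuous_on {0..r} G" by (rule G_cont) (use assms in simp)
  qed
  then show ?thesis using G0 by simp
qed

lemma G_inc: assumes "phil \<le> a" "a < b" shows "G a < G b"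
proof (rule DERIV_pos_imp_increasing_open[OF assms(2)])
  fix t assume t: "a < t" "t < b"
  show "\<exists>y. DERIV G t :> y \<and> y > 0"
  proof (intro exI conjI)
    have "t > 0" using t assms phil_pos by simp
    then show "DERIV G t :> h t * q t" by (rule G_deriv)
    show "h t * q t > 0" using h_pos[of t] q_pos[of t] t assms phil_pos by simp
  qed
next
  show "continuous_on {a..b} G"
    by (rule continuous_on_subset[OF G_cont[of b]]) (use assms phil_pos in auto)
qed


lemma G_big: "\<exists>R. phil < R \<and> G R > 0"
proof -
  define t where "t = phil + 1"
  have t: "t > phil" "t > 0" unfolding t_def using phil_pos by auto
  define qt where "qt = q t"
  have qt: "qt > 0" unfolding qt_def using q_pos[OF t(1)] .
  have low: "G r \<ge> G t + qt * (Ve r - Ve t) / (lam + lam0)" if r: "r \<ge> t" for r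
  proof -
    have comb: "integral {0..t} (\<lambda>z. h z * q z) + integral {t..r} (\<lambda>z. h z * q z) = integral {0..r} (\<lambda>z. h z * q z)"
      by (rule Henstock_Kurzweil_Integration.integral_combine) (use t r gq_int[of r] in auto)
    have hi: "((\<lambda>z. qt * h z) has_integral qt * ((Ve r - Ve t) / (lam + lam0))) {t..r}"
      by (rule has_integral_mult_right[OF h_int]) (use t r in auto)
    have "integral {t..r} (\<lambda>z. qt * h z) \<le> integral {t..r} (\<lambda>z. h z * q z)"
    proof (rule integral_le)
      show "(\<lambda>z. qt * h z) integrable_on {t..r}" using hi by blast
      show "(\<lambda>z. h z * q z) integrable_on {t..r}"
        by (rule integrable_on_subinterval[OF gq_int[of r]]) (use t r in auto)
      fix z assume z: "z \<in> {t..r}"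
      have "qt \<le> q z" unfolding qt_def using z t q_strict[of t z] by (cases "z = t") auto
      moreover have "h z \<ge> 0" using z t by (intro h_nonneg) simp
      ultimately have "qt * h z \<le> q z * h z" by (rule mult_right_mono)
      then show "qt * h z \<le> h z * q z" by (simp add: mult.commute)
    qed
    then have "qt * ((Ve r - Ve t) / (lam + lam0)) \<le> integral {t..r} (\<lambda>z. h z * q z)"
      using integral_unique[OF hi] by simp
    then show ?thesis using comb unfolding G_eq by simp
  qed
  define M where "M = Ve t + (lam + lam0) * (\<bar>G t\<bar> + 1) / qt"
  have "eventually (\<lambda>r. M \<le> Ve r \<and> t \<le> r) at_top"
    using Ve_top[unfolded filterlim_at_top] eventually_ge_at_top[of t] by (auto intro: eventually_conj)
  then obtain r where r: "M \<le> Ve r" "t \<le> r" unfolding eventually_at_top_linorder by auto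
  have "(lam + lam0) * (\<bar>G t\<bar> + 1) / qt \<le> Ve r - Ve t" using r(1) unfolding M_def by simp
  then have A: "(lam + lam0) * (\<bar>G t\<bar> + 1) \<le> (Ve r - Ve t) * qt" using qt by (simp add: pos_divide_le_eq)
  have lp: "lam + lam0 > 0" using lam_pos lam0_pos by simp
  have "\<bar>G t\<bar> + 1 \<le> qt * (Ve r - Ve t) / (lam + lam0)"
    using A lp by (simp add: pos_le_divide_eq mult.commute)
  then have "G r > 0" using low[OF r(2)] by linarith
  then show ?thesis using r(2) t by (intro exI[of _ r]) auto
qed

lemma G_ex1: "\<exists>!phi. phi > 0 \<and> G phi = 0"
proof -
  obtain R where R: "phil < R" "G R > 0" using G_big by auto
  have Gl: "G phil < 0" using G_neg[OF phil_pos] by simp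
  obtain x where x: "phil \<le> x" "x \<le> R" "G x = 0"
    using IVT'[of G phil 0 R] Gl R continuous_on_subset[OF G_cont[of R], of "{phil..R}"] phil_pos by force
  have xl: "x > phil" using x Gl by (cases "x = phil") auto
  show ?thesis
  proof (rule ex1I[of _ x])
    show "x > 0 \<and> G x = 0" using x xl phil_pos by simp
    fix y assume y: "y > 0 \<and> G y = 0"
    have yl: "y > phil" using G_neg[of y] y by force
    show "y = x"
    proof (rule ccontr)
      assume "y \<noteq> x"
      then have "y < x \<or> x < y" by auto
      then show False using G_inc[of y x] G_inc[of x y] x y yl xl by auto
    qed
  qed
qed

definition "phiw = (THE phi. phi > 0 \<and> G phi = 0)"

lemma phiw: "phiw > 0" "G phiw = 0"
  using theI'[OF G_ex1] unfolding phiw_def by auto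

lemma phiw_gt: "phiw > phil"
  using G_neg[of phiw] phiw by force

lemma G_below: "0 < x \<Longrightarrow> x < phiw \<Longrightarrow> G x < 0"
proof -
  assume x: "0 < x" "x < phiw"
  show "G x < 0"
  proof (cases "x \<le> phil")
    case True then show ?thesis using G_neg x by simp
  next
    case False then show ?thesis using G_inc[of x phiw] phiw x by simp
  qed
qed

lemma G_above: "phiw < x \<Longrightarrow> G x > 0"
  using G_inc[of phiw x] phiw phiw_gt by simp

end

theorem lemma4p2:
  fixes lam lam0 lam1 mu c y0 :: real
    and nu0 nu1 :: "'e measure"
    and psi eta w :: "real \<Rightarrow> real"
  assumes lam_pos: "lam > 0" and lam0_pos: "lam0 > 0" and lam1_pos: "lam1 > 0"
    and mu_nz: "mu \<noteq> 0" and c_pos: "c > 0" and y0_pos: "y0 > 0"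
    and nu0: "prob_space nu0" and nu1: "prob_space nu1"
    and sets_eq: "sets nu1 = sets nu0"
    and ac: "absolutely_continuous nu0 nu1"
    and psi_diff: "\<And>y. y > 0 \<Longrightarrow> psi differentiable (at y) \<and> deriv psi differentiable (at y)"
    and eta_diff: "\<And>y. y > 0 \<Longrightarrow> eta differentiable (at y) \<and> deriv eta differentiable (at y)"
    and psi_ode: "\<And>y. y > 0 \<Longrightarrow> A0op lam lam0 lam1 mu psi y = (lam + lam0) * psi y"
    and eta_ode: "\<And>y. y > 0 \<Longrightarrow> A0op lam lam0 lam1 mu eta y = (lam + lam0) * eta y"
    and psi_pos: "\<And>y. y > 0 \<Longrightarrow> psi y > 0"
    and eta_pos: "\<And>y. y > 0 \<Longrightarrow> eta y > 0"
    and psi_incr: "mono_on {0<..} psi"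
    and eta_decr: "antimono_on {0<..} eta"
    and psi_0: "\<exists>L. 0 < L \<and> (psi \<longlongrightarrow> L) (at_right 0)"
    and eta_0: "filterlim eta at_top (at_right 0)"
    and psi_inf: "filterlim psi at_top at_top"
    and eta_inf: "(eta \<longlongrightarrow> 0) at_top"
    and psi_S: "filterlim (\<lambda>y. deriv psi y / Sprime lam lam0 lam1 mu y0 y) at_top at_top"
    and w_bdd: "bounded (w ` {0..})"
    and w_cont: "continuous_on {0..} w"
    and w_mono: "mono_on {0..} w"
    and w_nonpos: "\<And>x. x \<ge> 0 \<Longrightarrow> w x \<le> 0"
  shows
    "(\<exists>!phi. phi > 0 \<and> Gop lam lam0 lam1 mu c nu0 nu1 psi eta w phi = 0)
     \<and> (\<exists>!phi. phi \<ge> 0 \<and> gfun lam c phi + lam0 * Kop lam0 lam1 nu0 nu1 w phi = 0)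
     \<and> (let phiw = (THE phi. phi > 0 \<and> Gop lam lam0 lam1 mu c nu0 nu1 psi eta w phi = 0);
            phil = (THE phi. phi \<ge> 0 \<and> gfun lam c phi + lam0 * Kop lam0 lam1 nu0 nu1 w phi = 0);
            phir = (THE phi. phi > 0 \<and>
                      Gop lam lam0 lam1 mu c nu0 nu1 psi eta (\<lambda>_. - supnorm w) phi = 0)
        in phil \<le> phiw \<and> phiw \<le> phir
           \<and> (\<forall>phi. 0 < phi \<and> phi < phiw \<longrightarrow> Gop lam lam0 lam1 mu c nu0 nu1 psi eta w phi < 0)
           \<and> (\<forall>phi. phi > phiw \<longrightarrow> Gop lam lam0 lam1 mu c nu0 nu1 psi eta w phi > 0))"
proof -
  interpret A: wsetting lam lam0 lam1 mu c y0 psi eta nu0 nu1 w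
    by (intro wsetting.intro setting.intro wsetting_axioms.intro) (fact assms)+
  have sn: "supnorm w \<ge> 0" by (rule A.supnorm_nonneg)
  interpret Z: wsetting lam lam0 lam1 mu c y0 psi eta nu0 nu1 "\<lambda>_. - supnorm w"
  proof (intro wsetting.intro setting.intro wsetting_axioms.intro)
    show "bounded ((\<lambda>_. - supnorm w) ` {0..})" unfolding image_constant_conv by simp
    show "continuous_on {0..} (\<lambda>_::real. - supnorm w)" by (rule continuous_on_const)
    show "mono_on {0..} (\<lambda>_::real. - supnorm w)" by (simp add: monotone_on_def)
    show "\<And>x. 0 \<le> x \<Longrightarrow> - supnorm w \<le> 0" using sn by simp
  qed (fact assms)+
  have cmp: "Z.G r \<le> A.G r" if r: "r \<ge> 0" for r
    unfolding A.G_eq Z.G_eq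
  proof (rule integral_le[OF Z.gq_int[OF r] A.gq_int[OF r]])
    fix z assume z: "z \<in> {0..r}"
    have "Z.q z = gfun lam c z - lam0 * supnorm w"
      unfolding Z.q_def K_const[OF nu0] by simp
    also have "\<dots> \<le> A.q z"
    proof -
      have "lam0 * (- supnorm w) \<le> lam0 * Kop lam0 lam1 nu0 nu1 w z"
        using K_ge[OF nu0 w_bdd w_cont _ lam0_pos lam1_pos, of z nu1] z lam0_pos
        by (intro mult_left_mono) auto
      then show ?thesis unfolding A.q_def by simp
    qed
    finally have "Z.q z \<le> A.q z" .
    moreover have "A.h z \<ge> 0" using z by (intro A.h_nonneg) simp
    ultimately show "A.h z * Z.q z \<le> A.h z * A.q z" by (rule mult_left_mono)
  qed
  have e1: "(THE phi. phi > 0 \<and> Gop lam lam0 lam1 mu c nu0 nu1 psi eta w phi = 0) = A.phiw"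
    unfolding A.phiw_def A.G_def ..
  have e2: "(THE phi. phi \<ge> 0 \<and> gfun lam c phi + lam0 * Kop lam0 lam1 nu0 nu1 w phi = 0) = A.phil"
    unfolding A.phil_def A.q_def ..
  have e3: "(THE phi. phi > 0 \<and> Gop lam lam0 lam1 mu c nu0 nu1 psi eta (\<lambda>_. - supnorm w) phi = 0) = Z.phiw"
    unfolding Z.phiw_def Z.G_def ..
  have r1: "\<exists>!phi. phi > 0 \<and> Gop lam lam0 lam1 mu c nu0 nu1 psi eta w phi = 0"
    using A.G_ex1 unfolding A.G_def .
  have r2: "\<exists>!phi. phi \<ge> 0 \<and> gfun lam c phi + lam0 * Kop lam0 lam1 nu0 nu1 w phi = 0"
    using A.phil_ex1 unfolding A.q_def .
  have le1: "A.phil \<le> A.phiw" using A.phiw_gt by simp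
  have le2: "A.phiw \<le> Z.phiw"
  proof (rule ccontr)
    assume "\<not> A.phiw \<le> Z.phiw"
    then have "A.G Z.phiw < 0" using A.G_below[of Z.phiw] Z.phiw by simp
    moreover have "Z.G Z.phiw \<le> A.G Z.phiw" using Z.phiw by (intro cmp) simp
    ultimately show False using Z.phiw by simp
  qed
  have s1: "\<forall>phi. 0 < phi \<and> phi < A.phiw \<longrightarrow> Gop lam lam0 lam1 mu c nu0 nu1 psi eta w phi < 0"
    using A.G_below unfolding A.G_def by blast
  have s2: "\<forall>phi. phi > A.phiw \<longrightarrow> Gop lam lam0 lam1 mu c nu0 nu1 psi eta w phi > 0"
    using A.G_above unfolding A.G_def by blast
  show ?thesis unfolding Let_def e1 e2 e3 using r1 r2 le1 le2 s1 s2 by blast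
qed

end
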